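(* For every graph $G$ on $n\ge 1$ vertices, \[ \operatorname{rank}(A_G+I)\cdot \operatorname{rank}(A_{\overline{G}}+I)\ \ge\ n, \] with equality if and only if $G=K_n$ or $\overline{G}=K_n$.
   Context: All graphs are simple (undirected, no loops or multiple edges). $A_G$ denotes the $n\times n$ adjacency matrix of $G$, $\overline{G}$ the complement of $G$, $I=I_n$ the $n\times n$ identity matrix, and $\operatorname{rank}$ is the rank over $\mathbb{R}$. $K_n$ is the complete graph on $n$ vertices. *)

theory Defs
  imports "HOL-Analysis.Analysis"
begin

definition simple_graph :: "('n \<Rightarrow> 'n \<Rightarrow> bool) \<Rightarrow> bool" where
  "simple_graph E \<longleftrightarrow> (\<forall>i j. E i j \<longleftrightarrow> E j i) \<and> (\<forall>i. \<not> E i i)"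

definition adj_matrix :: "('n::finite \<Rightarrow> 'n \<Rightarrow> bool) \<Rightarrow> real^'n^'n" where
  "adj_matrix E = (\<chi> i j. if E i j then 1 else 0)"

definition complement_graph :: "('n \<Rightarrow> 'n \<Rightarrow> bool) \<Rightarrow> ('n \<Rightarrow> 'n \<Rightarrow> bool)" where
  "complement_graph E = (\<lambda>i j. i \<noteq> j \<and> \<not> E i j)"

definition complete_graph :: "'n \<Rightarrow> 'n \<Rightarrow> bool" where
  "complete_graph = (\<lambda>i j. i \<noteq> j)"

end

theory Submission
  imports Defs
begin

lemma dim_Un_le:
  fixes S T :: "(real^'n) set"
  shows "dim (S \<union> T) \<le> dim S + dim T"
proof -
  obtain BS where BS: "BS \<subseteq> S" "independent BS" "S \<subseteq> span BS" "card BS = dim S"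
    using basis_exists by blast
  obtain BT where BT: "BT \<subseteq> T" "independent BT" "T \<subseteq> span BT" "card BT = dim T"
    using basis_exists by blast
  have fin: "finite BS" "finite BT" using BS(2) BT(2) finiteI_independent by auto
  have "S \<union> T \<subseteq> span (BS \<union> BT)"
    using BS(3) BT(3) span_mono[of BS "BS \<union> BT"] span_mono[of BT "BS \<union> BT"] by blast
  then have "dim (S \<union> T) \<le> card (BS \<union> BT)"
    using dim_le_card fin by blast
  also have "\<dots> \<le> card BS + card BT" by (rule card_Un_le)
  finally show ?thesis using BS(4) BT(4) by simp
qed

lemma rank_add_le:
  fixes A B :: "real^'n^'m"
  shows "rank (A + B) \<le> rank A + rank B"
proof -
  have "columns (A + B) \<subseteq> span (columns A \<union> columns B)"
  proof
    fix v assume "v \<in> columns (A + B)"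
    then obtain i where v: "v = column i (A + B)" by (auto simp: columns_def)
    have "v = column i A + column i B" unfolding v by (simp add: column_def vec_eq_iff)
    moreover have "column i A \<in> span (columns A \<union> columns B)"
      by (rule span_base) (auto simp: columns_def)
    moreover have "column i B \<in> span (columns A \<union> columns B)"
      by (rule span_base) (auto simp: columns_def)
    ultimately show "v \<in> span (columns A \<union> columns B)" using span_add by metis
  qed
  then have "dim (columns (A + B)) \<le> dim (columns A \<union> columns B)"
    by (metis dim_span dim_subset)
  also have "\<dots> \<le> dim (columns A) + dim (columns B)" by (rule dim_Un_le)
  finally show ?thesis by (simp add: column_rank_def)
qed

lemma adj_entry: "(adj_matrix H + mat 1) $ i $ j = (if H i j then 1 else 0) + (if i = j then 1 else 0)"
  by (simp add: adj_matrix_def mat_def)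

lemma col_entry: "column j (adj_matrix H + mat 1) $ i = (if H i j then 1 else 0) + (if i = j then 1 else 0)"
  by (simp add: column_def adj_matrix_def mat_def)

lemma independent_single:
  fixes x :: "real^'n"
  assumes "x \<noteq> 0" shows "independent {x}"
  using independent_insertI[of x "{}"] assms by (auto simp: span_empty)

lemma rank_ge2:
  fixes H :: "'n::finite \<Rightarrow> 'n \<Rightarrow> bool"
  assumes "simple_graph H" "\<not> H x y" "x \<noteq> y"
  shows "rank (adj_matrix H + mat 1) \<ge> 2"
proof -
  let ?M = "adj_matrix H + mat 1"
  let ?u = "column x ?M" and ?w = "column y ?M"
  have ux: "?u $ x = 1" "?u $ y = 0" "?w $ x = 0" "?w $ y = 1"
    using assms by (auto simp: col_entry simple_graph_def)
  have ne: "?u \<noteq> ?w" using ux by (metis zero_neq_one)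
  have w0: "?w \<noteq> 0" using ux by (metis zero_index zero_neq_one)
  have "?u \<notin> span {?w}"
  proof
    assume "?u \<in> span {?w}"
    then obtain k where "?u = k *\<^sub>R ?w" by (auto simp: span_singleton)
    then have "?u $ x = k * ?w $ x" by simp
    then show False using ux by simp
  qed
  then have ind: "independent {?u, ?w}"
    by (rule independent_insertI[OF _ independent_single[OF w0]])
  have "card {?u, ?w} \<le> dim (columns ?M)"
    by (rule independent_card_le_dim[OF _ ind]) (auto simp: columns_def)
  then show ?thesis using ne by (simp add: column_rank_def)
qed

lemma rank_ge3:
  fixes H :: "'n::finite \<Rightarrow> 'n \<Rightarrow> bool"
  assumes "simple_graph H" "H x y" "H y z" "\<not> H x z" "x \<noteq> z"
  shows "rank (adj_matrix H + mat 1) \<ge> 3"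
proof -
  let ?M = "adj_matrix H + mat 1"
  let ?a = "column x ?M" and ?b = "column y ?M" and ?c = "column z ?M"
  have xy: "x \<noteq> y" "y \<noteq> z" using assms unfolding simple_graph_def by auto
  have e: "?a $ x = 1" "?a $ y = 1" "?a $ z = 0"
          "?b $ x = 1" "?b $ y = 1" "?b $ z = 1"
          "?c $ x = 0" "?c $ y = 1" "?c $ z = 1"
    using assms xy by (auto simp: col_entry simple_graph_def)
  have ne: "?a \<noteq> ?b" "?a \<noteq> ?c" "?b \<noteq> ?c" using e by (metis zero_neq_one)+
  have c0: "?c \<noteq> 0" using e by (metis zero_index zero_neq_one)
  have "?b \<notin> span {?c}"
  proof
    assume "?b \<in> span {?c}"
    then obtain k where "?b = k *\<^sub>R ?c" by (auto simp: span_singleton)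
    then have "?b $ x = k * ?c $ x" by simp
    then show False using e by simp
  qed
  then have ind2: "independent {?b, ?c}"
    by (rule independent_insertI[OF _ independent_single[OF c0]])
  have "?a \<notin> span {?b, ?c}"
  proof
    assume "?a \<in> span {?b, ?c}"
    then obtain k where "?a - k *\<^sub>R ?b \<in> span {?c}" by (auto simp: span_breakdown_eq)
    then obtain l where kl: "?a - k *\<^sub>R ?b = l *\<^sub>R ?c" by (auto simp: span_singleton)
    have 1: "?a $ x - k * ?b $ x = l * ?c $ x" using arg_cong[where f="\<lambda>v. v $ x", OF kl]
      by (simp only: vector_minus_component vector_scaleR_component real_scaleR_def)
    have 2: "?a $ y - k * ?b $ y = l * ?c $ y" using arg_cong[where f="\<lambda>v. v $ y", OF kl]
      by (simp only: vector_minus_component vector_scaleR_component real_scaleR_def)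
    have 3: "?a $ z - k * ?b $ z = l * ?c $ z" using arg_cong[where f="\<lambda>v. v $ z", OF kl]
      by (simp only: vector_minus_component vector_scaleR_component real_scaleR_def)
    have "1 - k*1 = l*0" "1 - k*1 = l*1" "0 - k*1 = l*1" using 1 2 3 by (simp_all only: e)
    then show False by linarith
  qed
  then have ind: "independent {?a, ?b, ?c}"
    by (rule independent_insertI[OF _ ind2])
  have "card {?a, ?b, ?c} \<le> dim (columns ?M)"
    by (rule independent_card_le_dim[OF _ ind]) (auto simp: columns_def)
  then show ?thesis using ne by (simp add: column_rank_def)
qed

lemma simple_compl: "simple_graph E \<Longrightarrow> simple_graph (complement_graph E)"
  by (auto simp: simple_graph_def complement_graph_def)

lemma compl_compl: "simple_graph E \<Longrightarrow> complement_graph (complement_graph E) = E"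
  by (auto simp: simple_graph_def complement_graph_def fun_eq_iff)

lemma rank_JI:
  fixes E :: "'n::finite \<Rightarrow> 'n \<Rightarrow> bool"
  assumes "simple_graph E"
  shows "rank ((adj_matrix E + mat 1) + (adj_matrix (complement_graph E) + mat 1)) = CARD('n)"
proof -
  let ?M = "(adj_matrix E + mat 1) + (adj_matrix (complement_graph E) + mat 1)"
  have Mij: "?M $ i $ j = 1 + (if i = j then 1 else 0)" for i j
    using assms by (auto simp: adj_matrix_def mat_def complement_graph_def simple_graph_def)
  have "x = 0" if x: "?M *v x = 0" for x :: "real^'n"
  proof -
    have comp: "(?M *v x) $ i = sum (\<lambda>j. x $ j) UNIV + x $ i" for i
    proof -
      have "(?M *v x) $ i = (\<Sum>j\<in>UNIV. ?M $ i $ j * x $ j)"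
        by (simp add: matrix_vector_mult_def)
      also have "\<dots> = (\<Sum>j\<in>UNIV. x $ j + (if i = j then x $ j else 0))"
      proof (rule sum.cong[OF refl])
        fix j show "?M $ i $ j * x $ j = x $ j + (if i = j then x $ j else 0)"
          unfolding Mij by simp
      qed
      also have "\<dots> = sum (\<lambda>j. x $ j) UNIV + x $ i"
        by (simp add: sum.distrib)
      finally show ?thesis .
    qed
    define S where "S = sum (\<lambda>j. x $ j) UNIV"
    have xi: "x $ i = - S" for i using comp[of i] x unfolding S_def by (simp add: vec_eq_iff)
    have "S = (\<Sum>j\<in>(UNIV::'n set). - S)"
    proof -
      have "S = (\<Sum>j\<in>UNIV. x $ j)" by (rule S_def)
      also have "\<dots> = (\<Sum>j\<in>(UNIV::'n set). - S)" using xi by simp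
      finally show ?thesis .
    qed
    then have "S = - real CARD('n) * S" by simp
    then have "(1 + real CARD('n)) * S = 0" by (simp add: algebra_simps)
    then have "S = 0" by (metis add_pos_nonneg mult_eq_0_iff of_nat_0_le_iff zero_less_one less_irrefl)
    then show "x = 0" using xi by (simp add: vec_eq_iff)
  qed
  then show ?thesis using matrix_nonfull_linear_equations_eq[of ?M] by blast
qed

lemma rank_complete:
  "rank (adj_matrix (complete_graph :: 'n::finite \<Rightarrow> 'n \<Rightarrow> bool) + mat 1) = 1"
proof -
  let ?M = "adj_matrix (complete_graph :: 'n \<Rightarrow> 'n \<Rightarrow> bool) + mat 1"
  let ?v = "(\<chi> i. 1) :: real^'n"
  have Mij: "?M $ i $ j = 1" for i j
    by (auto simp: adj_matrix_def mat_def complete_graph_def)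
  have cols: "columns ?M = {?v}"
    by (simp only: columns_def column_def Mij) auto
  have "dim {?v} \<le> card {?v}" by (rule dim_le_card) (auto intro: span_base)
  then have le: "rank ?M \<le> 1" by (simp add: column_rank_def cols)
  have "?M \<noteq> 0" using Mij by (metis zero_index zero_neq_one)
  then have "rank ?M \<noteq> 0" by (simp add: rank_eq_0)
  then show ?thesis using le by linarith
qed

lemma empty_adj: "adj_matrix (\<lambda>(i::'n::finite) (j::'n). False) = 0"
  by (simp add: adj_matrix_def vec_eq_iff)

lemma compl_complete: "complement_graph complete_graph = (\<lambda>i j. False)"
  by (simp add: complement_graph_def complete_graph_def fun_eq_iff)

lemma p3_exists:
  assumes "simple_graph E" "E \<noteq> complete_graph" "complement_graph E \<noteq> complete_graph"
  shows "(\<exists>x y z. E x y \<and> E y z \<and> \<not> E x z \<and> x \<noteq> z) \<or>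
    (\<exists>x y z. complement_graph E x y \<and> complement_graph E y z \<and> \<not> complement_graph E x z \<and> x \<noteq> z)"
proof (rule ccontr)
  assume nc: "\<not> ?thesis"
  have sym: "E i j \<longleftrightarrow> E j i" for i j using assms(1) by (simp add: simple_graph_def)
  have irr: "\<not> E i i" for i using assms(1) by (simp add: simple_graph_def)
  have tr: "E x y \<Longrightarrow> E y z \<Longrightarrow> x \<noteq> z \<Longrightarrow> E x z" for x y z using nc by blast
  obtain a b where ab: "E a b" "a \<noteq> b"
    using assms(3) irr by (auto simp: complement_graph_def complete_graph_def fun_eq_iff)
  obtain u w where uw: "u \<noteq> w" "\<not> E u w"
    using assms(2) irr by (auto simp: complete_graph_def fun_eq_iff)
  show False
  proof (cases "E a u \<or> a = u")
    case True
    have "\<not> E a w" using True uw tr sym by blast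
    moreover have "\<not> E b w" using True uw tr sym ab by metis
    moreover have "w \<noteq> b" "w \<noteq> a" using ab \<open>\<not> E a w\<close> uw True sym by auto
    ultimately have "complement_graph E a w" "complement_graph E w b" "\<not> complement_graph E a b"
      using ab sym by (auto simp: complement_graph_def)
    then show False using nc ab by blast
  next
    case False
    have "\<not> E b u" using False tr ab by blast
    moreover have "u \<noteq> b" using False ab by auto
    ultimately have "complement_graph E a u" "complement_graph E u b" "\<not> complement_graph E a b"
      using ab sym False by (auto simp: complement_graph_def)
    then show False using nc ab by blast
  qed
qed

lemma nat_prod_bound:
  fixes r s :: nat
  assumes "r \<ge> 2" "s \<ge> 3"
  shows "r * s \<ge> r + s + 1"
proof -
  obtain a b where "r = a + 2" "s = b + 3" using assms by (metis add.commute le_Suc_ex)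
  then show ?thesis by (simp add: algebra_simps)
qed

theorem theorem2p1:
  fixes E :: "'n::finite \<Rightarrow> 'n \<Rightarrow> bool"
  assumes "simple_graph E"
  shows "rank (adj_matrix E + mat 1) * rank (adj_matrix (complement_graph E) + mat 1) \<ge> CARD('n)
    \<and> (rank (adj_matrix E + mat 1) * rank (adj_matrix (complement_graph E) + mat 1) = CARD('n)
         \<longleftrightarrow> (E = complete_graph \<or> complement_graph E = complete_graph))"
proof -
  define r where "r = rank (adj_matrix E + mat 1)"
  define s where "s = rank (adj_matrix (complement_graph E) + mat 1)"
  have sc: "simple_graph (complement_graph E)" using assms by (rule simple_compl)
  have irr: "\<not> E i i" for i using assms by (simp add: simple_graph_def)
  have sum: "CARD('n) \<le> r + s"
    using rank_JI[OF assms] rank_add_le[of "adj_matrix E + mat 1" "adj_matrix (complement_graph E) + mat 1"]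
    unfolding r_def s_def by simp
  have "CARD('n) \<le> r * s \<and> (r * s = CARD('n) \<longleftrightarrow> (E = complete_graph \<or> complement_graph E = complete_graph))"
  proof (cases "E = complete_graph")
    case True
    have "r = 1" unfolding r_def True by (rule rank_complete)
    moreover have "s = CARD('n)" unfolding s_def True compl_complete empty_adj
      by (simp add: rank_I)
    ultimately show ?thesis using True by simp
  next
    case nE: False
    show ?thesis
    proof (cases "complement_graph E = complete_graph")
      case True
      have E0: "E = (\<lambda>i j. False)" using compl_compl[OF assms] True compl_complete by metis
      have "s = 1" unfolding s_def True by (rule rank_complete)
      moreover have "r = CARD('n)" unfolding r_def E0 empty_adj
        by (simp add: rank_I)
      ultimately show ?thesis using True by simp
    next
      case nC: False
      obtain x y where xy: "x \<noteq> y" "\<not> E x y"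
        using nE irr by (auto simp: complete_graph_def fun_eq_iff)
      have r2: "r \<ge> 2" unfolding r_def by (rule rank_ge2[OF assms xy(2) xy(1)])
      obtain u v where uv: "u \<noteq> v" "\<not> complement_graph E u v"
        using nC irr by (auto simp: complete_graph_def complement_graph_def fun_eq_iff)
      have s2: "s \<ge> 2" unfolding s_def by (rule rank_ge2[OF sc uv(2) uv(1)])
      have "r \<ge> 3 \<or> s \<ge> 3"
        using p3_exists[OF assms nE nC]
      proof
        assume "\<exists>x y z. E x y \<and> E y z \<and> \<not> E x z \<and> x \<noteq> z"
        then obtain x y z where "E x y" "E y z" "\<not> E x z" "x \<noteq> z" by blast
        then have "r \<ge> 3" unfolding r_def by (intro rank_ge3[OF assms])
        then show ?thesis by simp
      next
        assume "\<exists>x y z. complement_graph E x y \<and> complement_graph E y z \<and> \<not> complement_graph E x z \<and> x \<noteq> z"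
        then obtain x y z where "complement_graph E x y" "complement_graph E y z"
          "\<not> complement_graph E x z" "x \<noteq> z" by blast
        then have "s \<ge> 3" unfolding s_def by (intro rank_ge3[OF sc])
        then show ?thesis by simp
      qed
      then have "r * s \<ge> r + s + 1"
        using r2 s2 nat_prod_bound[of r s] nat_prod_bound[of s r] by (auto simp: mult.commute)
      then show ?thesis using sum nE nC by simp
    qed
  qed
  then show ?thesis unfolding r_def s_def .
qed

end
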